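(* Let $n\geq 4$, let $B\subset\mathbb{R}^{n+1}$ be a symmetric convex body and let $\Gamma_1,\Gamma_2\subset\mathbb{R}^{n+1}$ be two distinct linear hyperplanes such that $K_i=\Gamma_i\cap B$ ($i=1,2$) are affine symmetric bodies of revolution with axes of revolution $L_i$ and associated hyperplanes of revolution $H_i\subset\Gamma_i$. If $L_1\subset H_2$, then $K_1$ is an ellipsoid.
   Context: A symmetric convex body is a compact convex set with nonempty interior invariant under $x\mapsto-x$. A symmetric convex body $K\subset\mathbb{R}^m$ is a symmetric body of revolution if it admits an axis of revolution: a 1-dimensional linear subspace $L$ such that every section of $K$ by an affine hyperplane $A$ orthogonal to $L$ is a closed Euclidean $(m-1)$-ball in $A$ centered at $A\cap L$ (possibly empty or a point); $L^\perp$ is the associated hyperplane of revolution. An affine symmetric body of revolution (in an $m$-dimensional linear subspace) is a convex body linearly equivalent to a symmetric body of revolution; the images of an axis and its associated hyperplane under the linear equivalence are called an axis and associated hyperplane of revolution of it. An ellipsoid is a set affinely equivalent to a closed Euclidean unit ball. *)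

theory Defs
  imports "HOL-Analysis.Analysis"
begin

(* All objects live in an ambient Euclidean space 'a. An m-dimensional linear
subspace V carries the induced Euclidean structure; "R^m" of the paper is modelled
by such a subspace. *)

definition sym_convex_body :: "'a::euclidean_space set \<Rightarrow> 'a set \<Rightarrow> bool" where
  "sym_convex_body V K \<longleftrightarrow> subspace V \<and> K \<subseteq> V \<and> compact K \<and> convex K \<and>
     (\<exists>x\<in>V. \<exists>e>0. ball x e \<inter> V \<subseteq> K) \<and> (\<forall>x\<in>K. - x \<in> K)"

(* L is an axis of revolution of K inside V: every section of K by an affine
hyperplane A of V orthogonal to L is a closed ball of A centred at A \<inter> L
(possibly empty or a point).  Such A are exactly the sets {x \<in> V. x \<bullet> u = t}
with 0 \<noteq> u \<in> L, and A \<inter> L = {(t / (u \<bullet> u)) *\<^sub>R u}. *)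
definition axis_of_revolution :: "'a::euclidean_space set \<Rightarrow> 'a set \<Rightarrow> 'a set \<Rightarrow> bool" where
  "axis_of_revolution V K L \<longleftrightarrow> subspace L \<and> dim L = 1 \<and> L \<subseteq> V \<and>
     (\<forall>u\<in>L. \<forall>t::real. u \<noteq> 0 \<longrightarrow>
        (\<exists>r. K \<inter> {x\<in>V. x \<bullet> u = t} = cball ((t / (u \<bullet> u)) *\<^sub>R u) r \<inter> {x\<in>V. x \<bullet> u = t}))"

definition sym_body_of_revolution :: "'a::euclidean_space set \<Rightarrow> 'a set \<Rightarrow> 'a set \<Rightarrow> bool" where
  "sym_body_of_revolution V K L \<longleftrightarrow> sym_convex_body V K \<and> axis_of_revolution V K L"

definition hyperplane_of_revolution :: "'a::euclidean_space set \<Rightarrow> 'a set \<Rightarrow> 'a set" where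
  "hyperplane_of_revolution V L = {x\<in>V. \<forall>y\<in>L. x \<bullet> y = 0}"

definition affine_sym_body_of_revolution ::
  "'a::euclidean_space set \<Rightarrow> 'a set \<Rightarrow> 'a set \<Rightarrow> 'a set \<Rightarrow> bool" where
  "affine_sym_body_of_revolution V K L H \<longleftrightarrow>
     (\<exists>V0 K0 L0 (T::'a \<Rightarrow> 'a). subspace V0 \<and> linear T \<and> inj_on T V0 \<and> T ` V0 = V \<and>
        sym_body_of_revolution V0 K0 L0 \<and> K = T ` K0 \<and> L = T ` L0 \<and>
        H = T ` hyperplane_of_revolution V0 L0)"

definition ellipsoid :: "'a::euclidean_space set \<Rightarrow> bool" where
  "ellipsoid E \<longleftrightarrow> (\<exists>V0 (T::'a \<Rightarrow> 'a) c. subspace V0 \<and> linear T \<and> inj_on T V0 \<and>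
      E = (\<lambda>x. T x + c) ` (cball 0 1 \<inter> V0))"

definition linear_hyperplane :: "'a::euclidean_space set \<Rightarrow> bool" where
  "linear_hyperplane G \<longleftrightarrow> subspace G \<and> dim G = DIM('a) - 1"

end

theory Submission imports Defs begin

lemma ball0_in_B:
  assumes "sym_convex_body UNIV B"
  shows "\<exists>\<epsilon>>0. ball 0 \<epsilon> \<subseteq> B"
proof -
  from assms obtain x \<epsilon> where "\<epsilon> > 0" "ball x \<epsilon> \<subseteq> B" and cB: "convex B"
    and sB: "\<forall>x\<in>B. - x \<in> B"
    unfolding sym_convex_body_def by auto
  have "ball 0 \<epsilon> \<subseteq> B"
  proof
    fix y assume y: "y \<in> ball (0::'a) \<epsilon>"
    have 1: "x + y \<in> B" using y \<open>ball x \<epsilon> \<subseteq> B\<close> by (auto simp: dist_norm)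
    have "x - y \<in> B" using y \<open>ball x \<epsilon> \<subseteq> B\<close> by (auto simp: dist_norm)
    then have 2: "y - x \<in> B" using sB by force
    have "(1/2) *\<^sub>R (x + y) + (1/2) *\<^sub>R (y - x) \<in> B"
      using cB 1 2 unfolding convex_def by auto
    moreover have "(1/2) *\<^sub>R (x + y) + (1/2) *\<^sub>R (y - x) = y"
      by (metis (no_types, lifting) add_diff_cancel_left' add_diff_eq diff_add_cancel scaleR_add_right scaleR_half_double)
    ultimately show "y \<in> B" by simp
  qed
  then show ?thesis using \<open>\<epsilon>>0\<close> by blast
qed

lemma axis_unit:
  assumes "axis_of_revolution V K L"
  shows "\<exists>e\<in>L. norm e = 1 \<and> L = span {e}"
proof -
  have sL: "subspace L" and dL: "dim L = 1" using assms unfolding axis_of_revolution_def by auto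
  have "\<not> L \<subseteq> {0}" using dL dim_eq_0[of L] by auto
  then obtain u where u: "u \<in> L" "u \<noteq> 0" by auto
  define e where "e = (1 / norm u) *\<^sub>R u"
  have eL: "e \<in> L" using sL u unfolding e_def by (simp add: subspace_scale)
  have ne: "norm e = 1" using u unfolding e_def by simp
  have "span {e} \<subseteq> L" using eL sL by (simp add: span_minimal)
  moreover have "dim L \<le> dim (span {e})" using dL ne by auto
  ultimately have "span {e} = L" using subspace_dim_equal[of "span {e}" L] sL by auto
  then show ?thesis using eL ne by auto
qed

lemma hyp_form:
  assumes "L = span {e}"
  shows "hyperplane_of_revolution V L = {x\<in>V. x \<bullet> e = 0}"
  using assms unfolding hyperplane_of_revolution_def span_singleton by auto

lemma slice_lemma:
  assumes "axis_of_revolution V K L" "e \<in> L" "norm e = 1"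
    and "x \<in> V" "x' \<in> V" "x \<bullet> e = x' \<bullet> e"
    and "norm (x - (x \<bullet> e) *\<^sub>R e) = norm (x' - (x' \<bullet> e) *\<^sub>R e)"
  shows "x \<in> K \<longleftrightarrow> x' \<in> K"
proof -
  have ee: "e \<bullet> e = 1" using assms(3) by (simp add: dot_square_norm)
  have e0: "e \<noteq> 0" using assms(3) by auto
  obtain r where r: "K \<inter> {y\<in>V. y \<bullet> e = x \<bullet> e} = cball (((x \<bullet> e) / (e \<bullet> e)) *\<^sub>R e) r \<inter> {y\<in>V. y \<bullet> e = x \<bullet> e}"
    using assms(1,2) e0 unfolding axis_of_revolution_def by blast
  have "x \<in> K \<longleftrightarrow> x \<in> K \<inter> {y\<in>V. y \<bullet> e = x \<bullet> e}" using assms(4) by auto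
  also have "\<dots> \<longleftrightarrow> norm (x - (x \<bullet> e) *\<^sub>R e) \<le> r" unfolding r using assms(4) ee
    by (simp add: dist_norm norm_minus_commute)
  also have "\<dots> \<longleftrightarrow> x' \<in> K \<inter> {y\<in>V. y \<bullet> e = x \<bullet> e}" unfolding r using assms(5,6,7) ee
    by (simp add: dist_norm norm_minus_commute)
  also have "\<dots> \<longleftrightarrow> x' \<in> K" using assms(5,6) by auto
  finally show ?thesis .
qed

lemma hyp_ball:
  assumes "sym_body_of_revolution V K L"
  shows "\<exists>r. \<forall>h \<in> hyperplane_of_revolution V L. h \<in> K \<longleftrightarrow> norm h \<le> r"
proof -
  have ax: "axis_of_revolution V K L" using assms unfolding sym_body_of_revolution_def by auto
  obtain e where e: "e \<in> L" "norm e = 1" "L = span {e}" using axis_unit[OF ax] by auto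
  have e0: "e \<noteq> 0" using e by auto
  obtain r where r: "K \<inter> {y\<in>V. y \<bullet> e = 0} = cball ((0 / (e \<bullet> e)) *\<^sub>R e) r \<inter> {y\<in>V. y \<bullet> e = 0}"
    using ax e e0 unfolding axis_of_revolution_def by blast
  have "\<forall>h \<in> hyperplane_of_revolution V L. h \<in> K \<longleftrightarrow> norm h \<le> r"
  proof
    fix h assume "h \<in> hyperplane_of_revolution V L"
    then have h: "h \<in> V" "h \<bullet> e = 0" using hyp_form[OF e(3)] by auto
    have "h \<in> K \<longleftrightarrow> h \<in> K \<inter> {y\<in>V. y \<bullet> e = 0}" using h by auto
    also have "\<dots> \<longleftrightarrow> norm h \<le> r" unfolding r using h by simp
    finally show "h \<in> K \<longleftrightarrow> norm h \<le> r" .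
  qed
  then show ?thesis by blast
qed

lemma dim_hyp:
  fixes V :: "'a::euclidean_space set"
  assumes "subspace V" "e \<in> V" "e \<noteq> 0"
  shows "dim {x\<in>V. x \<bullet> e = 0} + 1 = dim V" "subspace {x\<in>V. x \<bullet> e = 0}"
proof -
  have eq: "{x\<in>V. x \<bullet> e = 0} = V \<inter> {x. e \<bullet> x = 0}" by (auto simp: inner_commute)
  have sh: "subspace {x. e \<bullet> x = 0}" by (rule subspace_hyperplane)
  show "subspace {x\<in>V. x \<bullet> e = 0}" unfolding eq using assms(1) sh by (rule subspace_inter)
  have U: "{x + y |x y. x \<in> V \<and> y \<in> {x. e \<bullet> x = 0}} = UNIV"
  proof -
    { fix z :: 'a
      have "z = ((z \<bullet> e) / (e \<bullet> e)) *\<^sub>R e + (z - ((z \<bullet> e) / (e \<bullet> e)) *\<^sub>R e)" by simp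
      moreover have "((z \<bullet> e) / (e \<bullet> e)) *\<^sub>R e \<in> V" using assms by (simp add: subspace_scale)
      moreover have "e \<bullet> (z - ((z \<bullet> e) / (e \<bullet> e)) *\<^sub>R e) = 0" using assms(3)
        by (simp add: inner_diff_right inner_commute)
      ultimately have "z \<in> {x + y |x y. x \<in> V \<and> y \<in> {x. e \<bullet> x = 0}}" by blast }
    then show ?thesis by auto
  qed
  have "dim {x + y |x y. x \<in> V \<and> y \<in> {x. e \<bullet> x = 0}} + dim (V \<inter> {x. e \<bullet> x = 0}) = dim V + dim {x. e \<bullet> x = 0}"
    using dim_sums_Int[OF assms(1) sh] .
  then have "DIM('a) + dim {x\<in>V. x \<bullet> e = 0} = dim V + (DIM('a) - 1)"
    unfolding U eq dim_hyperplane[OF assms(3)] by simp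
  moreover have "DIM('a) \<ge> 1" by (simp add: DIM_positive Suc_leI)
  ultimately show "dim {x\<in>V. x \<bullet> e = 0} + 1 = dim V" by linarith
qed

definition Mmap :: "'a::euclidean_space \<Rightarrow> real \<Rightarrow> real \<Rightarrow> 'a \<Rightarrow> 'a" where
  "Mmap e a b y = (a * (y \<bullet> e)) *\<^sub>R e + b *\<^sub>R (y - (y \<bullet> e) *\<^sub>R e)"

lemma Mmap_comp:
  assumes "e \<bullet> e = 1"
  shows "Mmap e a b (Mmap e c d y) = Mmap e (a*c) (b*d) y"
proof -
  have "Mmap e c d y \<bullet> e = c * (y \<bullet> e)" unfolding Mmap_def using assms
    by (simp add: inner_add_left inner_diff_left)
  then show ?thesis unfolding Mmap_def by (simp add: algebra_simps)
qed

lemma Mmap_id: "Mmap e 1 1 y = y" unfolding Mmap_def by simp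

lemma Mmap_linear: "linear (Mmap e a b)"
  unfolding linear_iff Mmap_def by (auto simp: algebra_simps inner_add_left)

lemma Mmap_in: "subspace V \<Longrightarrow> e \<in> V \<Longrightarrow> y \<in> V \<Longrightarrow> Mmap e a b y \<in> V"
  unfolding Mmap_def by (intro subspace_add subspace_scale subspace_diff) auto

lemma Mmap_norm:
  assumes "e \<bullet> e = 1"
  shows "(norm (Mmap e a b y))^2 = (a * (y \<bullet> e))^2 + b^2 * (norm (y - (y \<bullet> e) *\<^sub>R e))^2"
proof -
  have "((a * (y \<bullet> e)) *\<^sub>R e) \<bullet> (b *\<^sub>R (y - (y \<bullet> e) *\<^sub>R e)) = 0"
    using assms by (simp add: inner_diff_right inner_commute)
  then have orth: "orthogonal ((a * (y \<bullet> e)) *\<^sub>R e) (b *\<^sub>R (y - (y \<bullet> e) *\<^sub>R e))"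
    unfolding orthogonal_def .
  have "(norm (Mmap e a b y))^2 = (norm ((a * (y \<bullet> e)) *\<^sub>R e))^2 + (norm (b *\<^sub>R (y - (y \<bullet> e) *\<^sub>R e)))^2"
    unfolding Mmap_def by (rule norm_add_Pythagorean[OF orth])
  moreover have "norm e = 1" using assms by (simp add: norm_eq_1)
  ultimately show ?thesis by (simp add: power_mult_distrib)
qed

lemma homog:
  fixes c d :: "'a::real_normed_vector"
  assumes "r > 0" "\<And>l::real. norm (l *\<^sub>R c) \<le> r \<longleftrightarrow> norm (l *\<^sub>R d) \<le> r"
  shows "norm c \<le> norm d"
proof (cases "d = 0")
  case True
  show ?thesis
  proof (rule ccontr)
    assume "\<not> norm c \<le> norm d"
    then have nc: "norm c > 0" using True by simp
    have "norm ((2 * r / norm c) *\<^sub>R d) \<le> r" using True assms(1) by simp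
    then have "norm ((2 * r / norm c) *\<^sub>R c) \<le> r" using assms(2) by blast
    moreover have "norm ((2 * r / norm c) *\<^sub>R c) = 2 * r" using nc assms(1) by simp
    ultimately show False using assms(1) by simp
  qed
next
  case False
  then have nd: "norm d > 0" by simp
  have "norm ((r / norm d) *\<^sub>R d) = r" using nd assms(1) by simp
  then have "norm ((r / norm d) *\<^sub>R c) \<le> r" using assms(2)[of "r / norm d"] by linarith
  moreover have "norm ((r / norm d) *\<^sub>R c) = (r / norm d) * norm c" using nd assms(1) by (simp add: abs_of_pos)
  ultimately have "(r / norm d) * norm c \<le> r" by linarith
  then have "r * norm c \<le> r * norm d" using nd by (simp add: field_simps)
  then show ?thesis using assms(1) by simp
qed


theorem mainTheorem12:
  fixes B G1 G2 L1 L2 H1 H2 :: "'a::euclidean_space set"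
  assumes "DIM('a) \<ge> 5"
    and "sym_convex_body UNIV B"
    and "linear_hyperplane G1" and "linear_hyperplane G2" and "G1 \<noteq> G2"
    and "affine_sym_body_of_revolution G1 (G1 \<inter> B) L1 H1"
    and "affine_sym_body_of_revolution G2 (G2 \<inter> B) L2 H2"
    and "L1 \<subseteq> H2"
  shows "ellipsoid (G1 \<inter> B)"
proof -
  obtain V1 K1 L01 and T1 :: "'a \<Rightarrow> 'a" where sV1: "subspace V1" and lT1: "linear T1" and iT1: "inj_on T1 V1"
    and imT1: "T1 ` V1 = G1" and sb1: "sym_body_of_revolution V1 K1 L01"
    and K1eq: "G1 \<inter> B = T1 ` K1" and L1eq: "L1 = T1 ` L01"
    using assms(6) unfolding affine_sym_body_of_revolution_def apply (elim exE conjE)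
    apply (rule that) apply assumption+ done
  obtain V2 K2 L02 and T2 :: "'a \<Rightarrow> 'a" where sV2: "subspace V2" and lT2: "linear T2" and iT2: "inj_on T2 V2"
    and imT2: "T2 ` V2 = G2" and sb2: "sym_body_of_revolution V2 K2 L02"
    and K2eq: "G2 \<inter> B = T2 ` K2" and H2eq: "H2 = T2 ` hyperplane_of_revolution V2 L02"
    using assms(7) unfolding affine_sym_body_of_revolution_def apply (elim exE conjE)
    apply (rule that) apply assumption+ done
  have ax1: "axis_of_revolution V1 K1 L01" and K1V: "K1 \<subseteq> V1"
    using sb1 unfolding sym_body_of_revolution_def sym_convex_body_def by auto
  have ax2: "axis_of_revolution V2 K2 L02" and K2V: "K2 \<subseteq> V2"
    using sb2 unfolding sym_body_of_revolution_def sym_convex_body_def by auto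
  have L01V: "L01 \<subseteq> V1" using ax1 unfolding axis_of_revolution_def by auto
  have L02V: "L02 \<subseteq> V2" using ax2 unfolding axis_of_revolution_def by auto
  obtain e where eL: "e \<in> L01" and ne: "norm e = 1" and Le: "L01 = span {e}"
    using axis_unit[OF ax1] by blast
  obtain e2 where e2L: "e2 \<in> L02" and ne2: "norm e2 = 1" and Le2: "L02 = span {e2}"
    using axis_unit[OF ax2] by blast
  have ee: "e \<bullet> e = 1" using ne by (simp add: dot_square_norm)
  have eV: "e \<in> V1" using eL L01V by auto
  have e2V: "e2 \<in> V2" using e2L L02V by auto
  define H0 where "H0 = hyperplane_of_revolution V2 L02"
  have H0eq: "H0 = {x\<in>V2. x \<bullet> e2 = 0}" unfolding H0_def by (rule hyp_form[OF Le2])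
  have dH0: "dim H0 + 1 = dim V2" and sH0: "subspace H0"
    unfolding H0eq using dim_hyp[OF sV2 e2V] ne2 by (metis norm_zero zero_neq_one)+
  have H0V: "H0 \<subseteq> V2" unfolding H0eq by auto
  obtain r2 where r2: "\<And>h. h \<in> H0 \<Longrightarrow> h \<in> K2 \<longleftrightarrow> norm h \<le> r2"
    using hyp_ball[OF sb2] unfolding H0_def by blast
  have M2: "T2 h \<in> B \<longleftrightarrow> norm h \<le> r2" if "h \<in> H0" for h
  proof -
    have hV: "h \<in> V2" using that H0V by auto
    have "T2 h \<in> B \<longleftrightarrow> T2 h \<in> G2 \<inter> B" using hV imT2 by auto
    also have "\<dots> \<longleftrightarrow> h \<in> K2" unfolding K2eq using hV K2V iT2
      by (auto simp: inj_on_def) (metis subsetD)?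
    also have "\<dots> \<longleftrightarrow> norm h \<le> r2" using r2[OF that] .
    finally show ?thesis .
  qed
  have M1: "T1 x \<in> B \<longleftrightarrow> x \<in> K1" if "x \<in> V1" for x
  proof -
    have "T1 x \<in> B \<longleftrightarrow> T1 x \<in> G1 \<inter> B" using that imT1 by auto
    also have "\<dots> \<longleftrightarrow> x \<in> K1" unfolding K1eq using that K1V iT1
      by (auto simp: inj_on_def) (metis subsetD)?
    finally show ?thesis .
  qed
  define v where "v = T1 e"
  have v0: "v \<noteq> 0"
  proof
    assume "v = 0"
    then have "T1 e = T1 0" using lT1 linear_0 unfolding v_def by metis
    then have "e = 0" using iT1 eV subspace_0[OF sV1] unfolding inj_on_def by blast
    then show False using ne by simp
  qed
  have vH2: "v \<in> H2" using assms(8) eL L1eq unfolding v_def by auto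
  have vG1: "v \<in> G1" using imT1 eV unfolding v_def by auto
  have sG1: "subspace G1" and dG1: "dim G1 = DIM('a) - 1"
    using assms(3) unfolding linear_hyperplane_def by auto
  have sG2: "subspace G2" and dG2: "dim G2 = DIM('a) - 1"
    using assms(4) unfolding linear_hyperplane_def by auto
  have dV2: "dim V2 = DIM('a) - 1"
  proof -
    have "span V2 = V2" using sV2 by simp
    then have "dim (T2 ` V2) = dim V2" using dim_image_eq[OF lT2, of V2] iT2 by metis
    then show ?thesis using imT2 dG2 by simp
  qed
  have sH2: "subspace H2" unfolding H2eq H0_def[symmetric]
    using linear_subspace_image[OF lT2 sH0] .
  have dH2: "dim H2 = DIM('a) - 2"
  proof -
    have "span H0 = H0" using sH0 by simp
    then have "inj_on T2 (span H0)" using iT2 H0V by (metis inj_on_subset)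
    then have "dim (T2 ` H0) = dim H0" using dim_image_eq[OF lT2, of H0] by metis
    then show ?thesis using dH0 dV2 unfolding H2eq H0_def[symmetric] by simp
  qed
  have dI: "dim (H2 \<inter> G1) \<ge> 2"
  proof -
    have "dim {x + y |x y. x \<in> H2 \<and> y \<in> G1} + dim (H2 \<inter> G1) = dim H2 + dim G1"
      using dim_sums_Int[OF sH2 sG1] .
    moreover have "dim {x + y |x y. x \<in> H2 \<and> y \<in> G1} \<le> DIM('a)" by (rule dim_subset_UNIV)
    ultimately show ?thesis using dH2 dG1 assms(1) by linarith
  qed
  obtain w where wH2: "w \<in> H2" and wG1: "w \<in> G1" and wsp: "w \<notin> span {v}"
  proof -
    have "\<not> H2 \<inter> G1 \<subseteq> span {v}"
    proof
      assume "H2 \<inter> G1 \<subseteq> span {v}"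
      then have "dim (H2 \<inter> G1) \<le> dim (span {v})" by (rule dim_subset)
      then show False using dI by (simp split: if_splits)
    qed
    then show ?thesis using that by blast
  qed
  obtain y where yV: "y \<in> V1" and Ty: "T1 y = w" using wG1 imT1 by blast
  define f where "f = y - (y \<bullet> e) *\<^sub>R e"
  have fV: "f \<in> V1" unfolding f_def using sV1 yV eV by (simp add: subspace_diff subspace_scale)
  have fe: "f \<bullet> e = 0" unfolding f_def using ee by (simp add: inner_diff_left)
  define w' where "w' = T1 f"
  have w'eq: "w' = w - (y \<bullet> e) *\<^sub>R v"
    unfolding w'_def f_def v_def using lT1 Ty by (simp add: linear_diff linear_scale)
  have w'H2: "w' \<in> H2" unfolding w'eq using sH2 wH2 vH2 by (simp add: subspace_diff subspace_scale)
  have w'0: "w' \<noteq> 0"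
  proof
    assume "w' = 0"
    then have "w = (y \<bullet> e) *\<^sub>R v" unfolding w'eq by simp
    then show False using wsp by (auto simp: span_singleton)
  qed
  have f0: "f \<noteq> 0" using w'0 lT1 unfolding w'_def by (auto simp: linear_0)
  obtain a1 where a1H: "a1 \<in> H0" and Ta1: "T2 a1 = v" using vH2 unfolding H2eq H0_def by blast
  obtain b where bH: "b \<in> H0" and Tb: "T2 b = w'" using w'H2 unfolding H2eq H0_def by blast
  have a10: "a1 \<noteq> 0" using Ta1 v0 lT2 by (auto simp: linear_0)
  have b0: "b \<noteq> 0" using Tb w'0 lT2 by (auto simp: linear_0)
  have key: "t *\<^sub>R e + s *\<^sub>R f \<in> K1 \<longleftrightarrow> norm (t *\<^sub>R a1 + s *\<^sub>R b) \<le> r2" for t s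
  proof -
    have inV: "t *\<^sub>R e + s *\<^sub>R f \<in> V1" using sV1 eV fV by (simp add: subspace_add subspace_scale)
    have inH: "t *\<^sub>R a1 + s *\<^sub>R b \<in> H0" using sH0 a1H bH by (simp add: subspace_add subspace_scale)
    have "T1 (t *\<^sub>R e + s *\<^sub>R f) = T2 (t *\<^sub>R a1 + s *\<^sub>R b)"
      using lT1 lT2 Ta1 Tb unfolding v_def w'_def by (simp add: linear_add linear_scale)
    then show ?thesis using M1[OF inV] M2[OF inH] by simp
  qed
  have symm: "t *\<^sub>R e + s *\<^sub>R f \<in> K1 \<longleftrightarrow> t *\<^sub>R e + (- s) *\<^sub>R f \<in> K1" for t s
  proof (rule slice_lemma[OF ax1 eL ne])
    show "t *\<^sub>R e + s *\<^sub>R f \<in> V1" "t *\<^sub>R e + (- s) *\<^sub>R f \<in> V1"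
      using sV1 eV fV by (simp_all add: subspace_add subspace_scale subspace_diff)
    show "(t *\<^sub>R e + s *\<^sub>R f) \<bullet> e = (t *\<^sub>R e + (- s) *\<^sub>R f) \<bullet> e"
      using fe by (simp add: inner_add_left inner_diff_left)
    have "(t *\<^sub>R e + s *\<^sub>R f) \<bullet> e = t" "(t *\<^sub>R e + (- s) *\<^sub>R f) \<bullet> e = t"
      using fe ee by (simp_all add: inner_add_left inner_diff_left)
    then show "norm (t *\<^sub>R e + s *\<^sub>R f - ((t *\<^sub>R e + s *\<^sub>R f) \<bullet> e) *\<^sub>R e) =
      norm (t *\<^sub>R e + - s *\<^sub>R f - ((t *\<^sub>R e + - s *\<^sub>R f) \<bullet> e) *\<^sub>R e)" by simp
  qed
  obtain \<epsilon> where ep: "\<epsilon> > 0" and bB: "ball 0 \<epsilon> \<subseteq> B" using ball0_in_B[OF assms(2)] by blast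
  have r2pos: "r2 > 0"
  proof -
    define d where "d = \<epsilon> / (2 * norm v)"
    have dpos: "d > 0" using ep v0 unfolding d_def by simp
    have "norm (d *\<^sub>R v) < \<epsilon>" using ep v0 unfolding d_def by simp
    then have "d *\<^sub>R v \<in> B" using bB by auto
    moreover have "d *\<^sub>R a1 \<in> H0" using sH0 a1H by (simp add: subspace_scale)
    moreover have "T2 (d *\<^sub>R a1) = d *\<^sub>R v" using lT2 Ta1 by (simp add: linear_scale)
    ultimately have "norm (d *\<^sub>R a1) \<le> r2" using M2 by metis
    moreover have "norm (d *\<^sub>R a1) > 0" using dpos a10 by simp
    ultimately show ?thesis by simp
  qed
  have eqn: "norm (l *\<^sub>R (a1 + b)) \<le> r2 \<longleftrightarrow> norm (l *\<^sub>R (a1 - b)) \<le> r2" for l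
  proof -
    have "norm (l *\<^sub>R (a1 + b)) \<le> r2 \<longleftrightarrow> l *\<^sub>R e + l *\<^sub>R f \<in> K1"
      using key[of l l] by (simp add: scaleR_add_right)
    also have "\<dots> \<longleftrightarrow> l *\<^sub>R e + (- l) *\<^sub>R f \<in> K1" using symm by blast
    also have "\<dots> \<longleftrightarrow> norm (l *\<^sub>R (a1 - b)) \<le> r2"
      using key[of l "- l"] by (simp add: scaleR_diff_right)
    finally show ?thesis .
  qed
  have "norm (a1 + b) = norm (a1 - b)"
    using homog[OF r2pos, of "a1 + b" "a1 - b"] homog[OF r2pos, of "a1 - b" "a1 + b"] eqn
    by (meson order_antisym)
  then have "(norm (a1 + b))^2 = (norm (a1 - b))^2" by simp
  then have ab: "a1 \<bullet> b = 0"
    by (simp add: power2_norm_eq_inner inner_add_left inner_add_right inner_diff_left inner_diff_right inner_commute)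
  have quad: "(norm (t *\<^sub>R a1 + s *\<^sub>R b))^2 = t^2 * (norm a1)^2 + s^2 * (norm b)^2" for t s
  proof -
    have "orthogonal (t *\<^sub>R a1) (s *\<^sub>R b)" using ab by (simp add: orthogonal_def)
    from norm_add_Pythagorean[OF this] show ?thesis by (simp add: power_mult_distrib)
  qed
  define R where "R = Mmap e (norm a1) (norm b / norm f)"
  define R' where "R' = Mmap e (1 / norm a1) (norm f / norm b)"
  have sq: "norm z \<le> r2 \<longleftrightarrow> (norm z)^2 \<le> r2^2" for z :: 'a
    using r2pos by (meson norm_ge_zero power2_le_imp_le power_mono less_imp_le)
  have crit: "x \<in> K1 \<longleftrightarrow> norm (R x) \<le> r2" if xV: "x \<in> V1" for x
  proof -
    define t where "t = x \<bullet> e"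
    define p where "p = x - t *\<^sub>R e"
    define \<sigma> where "\<sigma> = norm p / norm f"
    have nf: "norm f > 0" using f0 by simp
    have x'V: "t *\<^sub>R e + \<sigma> *\<^sub>R f \<in> V1" using sV1 eV fV by (simp add: subspace_add subspace_scale)
    have x'e: "(t *\<^sub>R e + \<sigma> *\<^sub>R f) \<bullet> e = t" using fe ee by (simp add: inner_add_left)
    have "norm (t *\<^sub>R e + \<sigma> *\<^sub>R f - t *\<^sub>R e) = norm p"
      using nf unfolding \<sigma>_def by simp
    then have "x \<in> K1 \<longleftrightarrow> t *\<^sub>R e + \<sigma> *\<^sub>R f \<in> K1"
      using slice_lemma[OF ax1 eL ne xV x'V] x'e unfolding p_def t_def by simp
    also have "\<dots> \<longleftrightarrow> norm (t *\<^sub>R a1 + \<sigma> *\<^sub>R b) \<le> r2" by (rule key)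
    also have "\<dots> \<longleftrightarrow> t^2 * (norm a1)^2 + \<sigma>^2 * (norm b)^2 \<le> r2^2" using sq quad by simp
    also have "t^2 * (norm a1)^2 + \<sigma>^2 * (norm b)^2 = (norm (R x))^2"
      unfolding R_def Mmap_norm[OF ee] using nf
      by (simp add: \<sigma>_def t_def p_def power_mult_distrib power_divide algebra_simps)
    also have "(norm (R x))^2 \<le> r2^2 \<longleftrightarrow> norm (R x) \<le> r2" using sq by simp
    finally show ?thesis .
  qed
  have na1: "norm a1 \<noteq> 0" and nb: "norm b \<noteq> 0" and nf: "norm f \<noteq> 0" using a10 b0 f0 by auto
  have RR': "R (R' z) = z" for z
    unfolding R_def R'_def Mmap_comp[OF ee] using na1 nb nf by (simp add: Mmap_id)
  have R'R: "R' (R z) = z" for z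
    unfolding R_def R'_def Mmap_comp[OF ee] using na1 nb nf by (simp add: Mmap_id)
  have lR': "linear R'" unfolding R'_def by (rule Mmap_linear)
  have R'V: "R' z \<in> V1" if "z \<in> V1" for z unfolding R'_def by (rule Mmap_in[OF sV1 eV that])
  have RV: "R z \<in> V1" if "z \<in> V1" for z unfolding R_def by (rule Mmap_in[OF sV1 eV that])
  define T where "T = (\<lambda>z. T1 (R' (r2 *\<^sub>R z)))"
  have lT: "linear T" unfolding T_def linear_iff using lR' lT1
    by (simp add: linear_add linear_scale scaleR_add_right)
  have iT: "inj_on T V1"
  proof (rule inj_onI)
    fix z1 z2 assume z: "z1 \<in> V1" "z2 \<in> V1" "T z1 = T z2"
    have "r2 *\<^sub>R z1 \<in> V1" "r2 *\<^sub>R z2 \<in> V1" using z sV1 by (auto simp: subspace_scale)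
    then have "R' (r2 *\<^sub>R z1) = R' (r2 *\<^sub>R z2)" using z(3) iT1 R'V unfolding T_def inj_on_def by blast
    then have "R (R' (r2 *\<^sub>R z1)) = R (R' (r2 *\<^sub>R z2))" by simp
    then show "z1 = z2" using r2pos by (simp add: RR')
  qed
  have K1im: "K1 = (\<lambda>z. R' (r2 *\<^sub>R z)) ` (cball 0 1 \<inter> V1)"
  proof
    show "K1 \<subseteq> (\<lambda>z. R' (r2 *\<^sub>R z)) ` (cball 0 1 \<inter> V1)"
    proof
      fix x assume xK: "x \<in> K1"
      then have xV: "x \<in> V1" using K1V by auto
      define z where "z = (1 / r2) *\<^sub>R R x"
      have "norm (R x) \<le> r2" using crit[OF xV] xK by simp
      then have "norm z \<le> 1" using r2pos unfolding z_def by (simp add: field_simps)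
      moreover have "z \<in> V1" unfolding z_def using RV[OF xV] sV1 by (simp add: subspace_scale)
      moreover have "R' (r2 *\<^sub>R z) = x" unfolding z_def using r2pos by (simp add: R'R)
      ultimately show "x \<in> (\<lambda>z. R' (r2 *\<^sub>R z)) ` (cball 0 1 \<inter> V1)" by force
    qed
    show "(\<lambda>z. R' (r2 *\<^sub>R z)) ` (cball 0 1 \<inter> V1) \<subseteq> K1"
    proof
      fix x assume "x \<in> (\<lambda>z. R' (r2 *\<^sub>R z)) ` (cball 0 1 \<inter> V1)"
      then obtain z where z: "norm z \<le> 1" "z \<in> V1" and xz: "x = R' (r2 *\<^sub>R z)" by auto
      have xV: "x \<in> V1" unfolding xz using R'V sV1 z(2) by (simp add: subspace_scale)
      have "norm (R x) = r2 * norm z" unfolding xz RR' using r2pos by simp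
      also have "\<dots> \<le> r2" using z(1) r2pos by (simp add: mult_left_le)
      finally show "x \<in> K1" using crit[OF xV] by simp
    qed
  qed
  have "G1 \<inter> B = (\<lambda>x. T x + 0) ` (cball 0 1 \<inter> V1)"
    unfolding K1eq K1im T_def by (simp add: image_image)
  then show ?thesis unfolding ellipsoid_def using sV1 lT iT by blast
qed
end
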